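(* For all $\alpha\in\mathbb R$ and $\rho>1$, $$\lim_{n\to\infty}\max_{Q\in\mathcal P_n(\rho)}D_{\mathrm A}^{(\alpha)}(Q\|U_n)=\Delta(\alpha,\rho),$$ where, for $\alpha\notin\{0,1\}$, $$\Delta(\alpha,\rho)=\frac1{\alpha(\alpha-1)}\Bigg[\frac{\big(\frac{\rho^\alpha-1}{\alpha}\big)^{\alpha}\big(\frac{\rho-\rho^\alpha}{1-\alpha}\big)^{1-\alpha}}{\rho-1}-1\Bigg],$$ and $\Delta(1,\rho)=\Delta(0,\rho)=\frac{\rho\ln\rho}{\rho-1}-\ln\big(\frac{e\rho\ln\rho}{\rho-1}\big)$. In particular, for all $n\ge2$, $\max_{Q\in\mathcal P_n(\rho)}D(Q\|U_n)\le\frac{\rho\log\rho}{\rho-1}-\log\big(\frac{e\rho\ln\rho}{\rho-1}\big)$, and this bound is asymptotically tight as $n\to\infty$.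
   Context: $\mathcal P_n(\rho)$: probability mass functions on $\{1,\dots,n\}$ with all masses positive and ratio of maximal to minimal mass at most $\rho$; $U_n$ uniform on $\{1,\dots,n\}$. The Alpha-divergence is $D_{\mathrm A}^{(\alpha)}(P\|Q):=\sum_xQ(x)u_\alpha(P(x)/Q(x))$ with $u_\alpha(t)=\frac{t^\alpha-\alpha(t-1)-1}{\alpha(\alpha-1)}$ for $\alpha\notin\{0,1\}$, $u_1(t)=t\ln t+1-t$, $u_0(t)=-\ln t$. $D(P\|Q)=\sum_xP(x)\log\frac{P(x)}{Q(x)}$ with logarithm in an arbitrary base. *)

theory Defs
  imports Complex_Main
begin

definition u_alpha :: "real \<Rightarrow> real \<Rightarrow> real" where
  "u_alpha \<alpha> t =
     (if \<alpha> = 1 then t * ln t + 1 - t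
      else if \<alpha> = 0 then - ln t
      else (t powr \<alpha> - \<alpha> * (t - 1) - 1) / (\<alpha> * (\<alpha> - 1)))"

definition unif :: "nat \<Rightarrow> nat \<Rightarrow> real" where
  "unif n x = (if x \<in> {1..n} then 1 / real n else 0)"

definition alpha_div :: "real \<Rightarrow> nat \<Rightarrow> (nat \<Rightarrow> real) \<Rightarrow> (nat \<Rightarrow> real) \<Rightarrow> real" where
  "alpha_div \<alpha> n P Q = (\<Sum>x\<in>{1..n}. Q x * u_alpha \<alpha> (P x / Q x))"

definition rel_ent :: "real \<Rightarrow> nat \<Rightarrow> (nat \<Rightarrow> real) \<Rightarrow> (nat \<Rightarrow> real) \<Rightarrow> real" where
  "rel_ent b n P Q = (\<Sum>x\<in>{1..n}. P x * log b (P x / Q x))"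

definition Pn :: "real \<Rightarrow> nat \<Rightarrow> (nat \<Rightarrow> real) set" where
  "Pn \<rho> n = {Q. (\<forall>x\<in>{1..n}. Q x > 0) \<and> (\<forall>x. x \<notin> {1..n} \<longrightarrow> Q x = 0) \<and>
      (\<Sum>x\<in>{1..n}. Q x) = 1 \<and>
      Max (Q ` {1..n}) / Min (Q ` {1..n}) \<le> \<rho>}"

definition Delta :: "real \<Rightarrow> real \<Rightarrow> real" where
  "Delta \<alpha> \<rho> =
     (if \<alpha> = 0 \<or> \<alpha> = 1 then
        \<rho> * ln \<rho> / (\<rho> - 1) - ln (exp 1 * \<rho> * ln \<rho> / (\<rho> - 1))
      else
        1 / (\<alpha> * (\<alpha> - 1)) *
          (((\<rho> powr \<alpha> - 1) / \<alpha>) powr \<alpha> * ((\<rho> - \<rho> powr \<alpha>) / (1 - \<alpha>)) powr (1 - \<alpha>)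
            / (\<rho> - 1) - 1))"

end

theory Submission
  imports Defs "HOL-Analysis.Convex"
begin

definition Gf :: "real \<Rightarrow> real \<Rightarrow> real \<Rightarrow> real" where
  "Gf \<alpha> \<rho> m = u_alpha \<alpha> m + (1 - m) / ((\<rho> - 1) * m) * (u_alpha \<alpha> (\<rho> * m) - u_alpha \<alpha> m)"

lemma unimodal:
  fixes G G' :: "real \<Rightarrow> real"
  assumes r: "\<rho> > 1" and der: "\<And>m. m > 0 \<Longrightarrow> (G has_real_derivative G' m) (at m)"
    and ms: "ms > 0" and pos: "\<And>m. 0 < m \<Longrightarrow> m < ms \<Longrightarrow> G' m > 0"
    and neg: "\<And>m. ms < m \<Longrightarrow> G' m < 0" and eq: "G (1/\<rho>) = G 1"
  shows "1/\<rho> < ms \<and> ms < 1 \<and> (\<forall>m>0. G m \<le> G ms) \<and> isCont G ms"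
proof -
  have r0: "0 < 1/\<rho>" "1/\<rho> < 1" using r by auto
  obtain z where z: "1/\<rho> < z" "z < 1" "G 1 - G (1/\<rho>) = (1 - 1/\<rho>) * G' z"
    using MVT2[of "1/\<rho>" 1 G G'] der r0 by (metis less_le_trans)
  have "G' z = 0" using z r0 eq by simp
  then have "z = ms" using pos[of z] neg[of z] z r0 by (metis less_irrefl linorder_neqE_linordered_idom less_trans)
  then have a1: "1/\<rho> < ms" "ms < 1" using z by auto
  have "\<forall>m>0. G m \<le> G ms"
  proof (intro allI impI)
    fix m :: real assume m: "m > 0"
    consider "m < ms" | "m = ms" | "m > ms" by linarith
    then show "G m \<le> G ms"
    proof cases
      case 1
      obtain w where w: "m < w" "w < ms" "G ms - G m = (ms - m) * G' w"
        using MVT2[of m ms G G'] der 1 m by (metis less_le_trans)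
      have "G' w > 0" using pos w m by auto
      then show ?thesis using w 1 by (smt (verit) mult_pos_pos)
    next
      case 2 then show ?thesis by simp
    next
      case 3
      obtain w where w: "ms < w" "w < m" "G m - G ms = (m - ms) * G' w"
        using MVT2[of ms m G G'] der 3 ms by (metis less_le_trans)
      have "G' w < 0" using neg w by auto
      then show ?thesis using w 3 by (smt (verit) mult_pos_neg)
    qed
  qed
  moreover have "isCont G ms" using DERIV_isCont[OF der[OF ms]] .
  ultimately show ?thesis using a1 by blast
qed

lemma u1: "u_alpha \<alpha> 1 = 0" by (simp add: u_alpha_def)

lemma Gf_ends: assumes "\<rho> > 1" shows "Gf \<alpha> \<rho> (1/\<rho>) = Gf \<alpha> \<rho> 1"
proof -
  have "(1 - 1/\<rho>) / ((\<rho> - 1) * (1/\<rho>)) = 1" using assms by (simp add: field_simps)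
  then show ?thesis using assms by (simp add: Gf_def u1)
qed

lemma via_closed:
  fixes Gc Gc' :: "real \<Rightarrow> real"
  assumes r: "\<rho> > 1" and eqG: "\<And>m. m > 0 \<Longrightarrow> Gf \<alpha> \<rho> m = Gc m"
    and der: "\<And>m. m > 0 \<Longrightarrow> (Gc has_real_derivative Gc' m) (at m)"
    and ms: "ms > 0" and pos: "\<And>m. 0 < m \<Longrightarrow> m < ms \<Longrightarrow> Gc' m > 0"
    and neg: "\<And>m. ms < m \<Longrightarrow> Gc' m < 0" and val: "Gc ms = Delta \<alpha> \<rho>"
  shows "\<exists>ms. 1/\<rho> < ms \<and> ms < 1 \<and> (\<forall>m>0. Gf \<alpha> \<rho> m \<le> Delta \<alpha> \<rho>) \<and> isCont (Gf \<alpha> \<rho>) ms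
           \<and> Gf \<alpha> \<rho> ms = Delta \<alpha> \<rho>"
proof -
  have der': "(Gf \<alpha> \<rho> has_real_derivative Gc' m) (at m)" if "m > 0" for m
    by (rule has_field_derivative_transform_within_open[OF der[OF that], of "{0<..}"])
       (use that eqG in auto)
  have "Gf \<alpha> \<rho> ms = Delta \<alpha> \<rho>" using eqG[OF ms] val by simp
  with unimodal[OF r der' ms pos neg Gf_ends[OF r]] show ?thesis by auto
qed


lemma case_gen:
  assumes r: "\<rho> > 1" and a0: "\<alpha> \<noteq> 0" and a1: "\<alpha> \<noteq> 1"
  shows "\<exists>ms. 1/\<rho> < ms \<and> ms < 1 \<and> (\<forall>m>0. Gf \<alpha> \<rho> m \<le> Delta \<alpha> \<rho>) \<and> isCont (Gf \<alpha> \<rho>) ms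
           \<and> Gf \<alpha> \<rho> ms = Delta \<alpha> \<rho>"
proof -
  define a where "a = \<rho> powr \<alpha> - 1"
  define c where "c = \<rho> - 1"
  define X where "X = a / \<alpha>"
  define Y where "Y = (c - a) / (1 - \<alpha>)"
  define p where "p = a / (c * \<alpha>)"
  define q where "q = (c - a) / (c * (\<alpha> - 1))"
  define ms where "ms = X / Y"
  have c0: "c > 0" using r by (simp add: c_def)
  have X0: "X > 0"
  proof (cases "\<alpha> > 0")
    case True
    then have "\<rho> powr \<alpha> > 1" using r by simp
    then show ?thesis using True by (simp add: X_def a_def)
  next
    case False
    then have "\<alpha> < 0" using a0 by simp
    then have "\<rho> powr \<alpha> < 1" using r by (simp add: powr_less_one)
    then show ?thesis using \<open>\<alpha> < 0\<close> by (simp add: X_def a_def divide_neg_neg)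
  qed
  have Y0: "Y > 0"
  proof (cases "\<alpha> > 1")
    case True
    then have "\<rho> powr \<alpha> > \<rho>" using r powr_less_cancel_iff[of \<rho> 1 \<alpha>] by simp
    then show ?thesis using True r by (simp add: Y_def a_def c_def divide_neg_neg)
  next
    case False
    then have "\<alpha> < 1" using a1 by simp
    then have "\<rho> powr \<alpha> < \<rho>" using r powr_less_cancel_iff[of \<rho> \<alpha> 1] by simp
    then show ?thesis using \<open>\<alpha> < 1\<close> r by (simp add: Y_def a_def c_def)
  qed
  have ca: "c - a \<noteq> 0" using Y0 Y_def by auto
  have p0: "p > 0"
  proof -
    have "p = X / c" by (simp add: p_def X_def)
    then show ?thesis using X0 c0 by simp
  qed
  have q0: "q < 0"
  proof -
    have "q = - (Y / c)" using a1 c0 by (simp add: q_def Y_def field_simps)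
    then show ?thesis using Y0 c0 by simp
  qed
  have ms0: "ms > 0" using X0 Y0 by (simp add: ms_def)
  have nz: "\<alpha> - 1 \<noteq> 0" "1 - \<alpha> \<noteq> 0" "c \<noteq> 0" using a1 c0 by auto
  have msf: "ms = a * (1 - \<alpha>) / (\<alpha> * (c - a))"
    using a0 nz ca by (simp add: ms_def X_def Y_def field_simps)
  have qms: "q * ms = - p"
  proof -
    have "q * ms = (c - a) * (a * (1 - \<alpha>)) / ((c * (\<alpha> - 1)) * (\<alpha> * (c - a)))"
      by (simp add: q_def msf)
    also have "\<dots> = a * (1 - \<alpha>) / (c * (\<alpha> - 1) * \<alpha>)" using ca by simp
    also have "\<dots> = - p" using nz a0 by (simp add: p_def field_simps)
    finally show ?thesis .
  qed
  define Gc where "Gc = (\<lambda>m::real. (m powr \<alpha> + (a/c) * (m powr (\<alpha>-1) - m powr \<alpha>) - 1) / (\<alpha> * (\<alpha> - 1)))"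
  define Gc' where "Gc' = (\<lambda>m::real. m powr (\<alpha> - 2) * (p + q * m))"
  have pw1: "m powr \<alpha> = m * m powr (\<alpha> - 1)" if "m > 0" for m :: real
    using that powr_add[of m "\<alpha> - 1" 1] by simp
  have pw2: "m powr (\<alpha> - 1) = m * m powr (\<alpha> - 2)" if "m > 0" for m :: real
    using that powr_add[of m "\<alpha> - 2" 1] by simp
  have eqG: "Gf \<alpha> \<rho> m = Gc m" if m: "m > 0" for m
  proof -
    define P where "P = m powr (\<alpha> - 1)"
    define k where "k = \<alpha> * (\<alpha> - 1)"
    have k0: "k \<noteq> 0" using a0 nz by (simp add: k_def)
    have e: "(\<rho> * m) powr \<alpha> = (a + 1) * (m * P)"
      using m r by (simp add: powr_mult a_def pw1 P_def)
    have rr: "\<rho> = c + 1" by (simp add: c_def)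
    have d3: "u_alpha \<alpha> m = (m * P - \<alpha> * (m - 1) - 1) / k"
      unfolding u_alpha_def using a0 a1 pw1[OF m] by (simp add: P_def k_def)
    have d4: "u_alpha \<alpha> (\<rho> * m) = ((a + 1) * (m * P) - \<alpha> * (\<rho> * m - 1) - 1) / k"
      unfolding u_alpha_def using a0 a1 e by (simp add: k_def)
    have "u_alpha \<alpha> (\<rho> * m) - u_alpha \<alpha> m = (((a + 1) * (m * P) - \<alpha> * (\<rho> * m - 1) - 1) - (m * P - \<alpha> * (m - 1) - 1)) / k"
      unfolding d3 d4 by (simp add: diff_divide_distrib add_divide_distrib)
    also have "\<dots> = (a * m * P - \<alpha> * c * m) / k"
      by (rule arg_cong[where f="\<lambda>x. x / k"]) (simp add: rr algebra_simps)
    finally have d1: "u_alpha \<alpha> (\<rho> * m) - u_alpha \<alpha> m = (a * m * P - \<alpha> * c * m) / k" .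
    have d2: "(1 - m) / (c * m) * ((a * m * P - \<alpha> * c * m) / k) = ((1 - m) * a * P / c - \<alpha> * (1 - m)) / k"
      using m nz k0 by (simp add: field_simps)
    have "Gf \<alpha> \<rho> m = (m * P - \<alpha> * (m - 1) - 1) / k + ((1 - m) * a * P / c - \<alpha> * (1 - m)) / k"
      unfolding Gf_def d1 d3[symmetric] c_def[symmetric] using d2 by simp
    also have "\<dots> = ((m * P - \<alpha> * (m - 1) - 1) + ((1 - m) * a * P / c - \<alpha> * (1 - m))) / k"
      by (simp add: add_divide_distrib)
    also have "\<dots> = (m powr \<alpha> + (a/c) * (m powr (\<alpha>-1) - m powr \<alpha>) - 1) / k"
      by (rule arg_cong[where f="\<lambda>x. x / k"]) (use pw1[OF m] nz in \<open>simp add: P_def[symmetric] field_simps\<close>)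
    also have "\<dots> = Gc m" unfolding Gc_def k_def ..
    finally show ?thesis .
  qed
  have der: "(Gc has_real_derivative Gc' m) (at m)" if m: "m > 0" for m
  proof -
    have "(Gc has_real_derivative
      (\<alpha> * m powr (\<alpha> - 1) + (a/c) * ((\<alpha>-1) * m powr (\<alpha> - 1 - 1) - \<alpha> * m powr (\<alpha> - 1))) / (\<alpha> * (\<alpha> - 1))) (at m)"
      unfolding Gc_def
      by (intro derivative_eq_intros has_real_derivative_powr m) (use a0 a1 in auto)
    moreover have "(\<alpha> * m powr (\<alpha> - 1) + (a/c) * ((\<alpha>-1) * m powr (\<alpha> - 1 - 1) - \<alpha> * m powr (\<alpha> - 1))) / (\<alpha> * (\<alpha> - 1))
        = Gc' m"
    proof -
      have "\<alpha> - 1 - 1 = \<alpha> - 2" by simp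
      then show ?thesis unfolding Gc'_def p_def q_def using pw2[OF m] a0 a1 c0 m
        by (simp add: field_simps)
    qed
    ultimately show ?thesis by simp
  qed
  have lin: "p + q * m = q * (m - ms)" for m using qms by (simp add: algebra_simps)
  have pos: "Gc' m > 0" if "0 < m" "m < ms" for m
    unfolding Gc'_def lin using that q0 by (simp add: mult_neg_neg)
  have neg: "Gc' m < 0" if "ms < m" for m
  proof -
    have "m > 0" using that ms0 by simp
    then show ?thesis unfolding Gc'_def lin using that q0 by (simp add: mult_pos_neg mult_neg_pos)
  qed
  have val: "Gc ms = Delta \<alpha> \<rho>"
  proof -
    have h1: "ms * (c - a) + a = X" using a0 a1 ca by (simp add: ms_def X_def Y_def field_simps)
    have h3: "ms powr (\<alpha> - 1) = X powr (\<alpha> - 1) * Y powr (1 - \<alpha>)"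
    proof -
      have "Y powr (1 - \<alpha>) = inverse (Y powr (\<alpha> - 1))" using powr_minus[of Y "\<alpha> - 1"] by simp
      then show ?thesis by (simp add: ms_def powr_divide X0 Y0 less_imp_le field_simps)
    qed
    have h4: "X powr \<alpha> = X * X powr (\<alpha> - 1)" using pw1[OF X0] .
    have key: "ms powr \<alpha> + (a/c) * (ms powr (\<alpha>-1) - ms powr \<alpha>) = X powr \<alpha> * Y powr (1 - \<alpha>) / c"
    proof -
      have "ms powr \<alpha> + (a/c) * (ms powr (\<alpha>-1) - ms powr \<alpha>) = ms powr (\<alpha>-1) * ((ms * (c - a) + a) / c)"
        using pw1[OF ms0] c0 by (simp add: field_simps)
      also have "\<dots> = X powr \<alpha> * Y powr (1 - \<alpha>) / c" unfolding h1 h3 h4 by simp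
      finally show ?thesis .
    qed
    have d: "Delta \<alpha> \<rho> = 1 / (\<alpha> * (\<alpha> - 1)) * (X powr \<alpha> * Y powr (1 - \<alpha>) / c - 1)"
    proof -
      have "\<rho> - \<rho> powr \<alpha> = c - a" by (simp add: a_def c_def)
      then show ?thesis using a0 a1 unfolding Delta_def X_def Y_def a_def c_def by simp
    qed
    show ?thesis unfolding Gc_def d key by simp
  qed
  show ?thesis by (rule via_closed[OF r eqG der ms0 pos neg val])
qed


lemma case_one:
  assumes r: "\<rho> > 1"
  shows "\<exists>ms. 1/\<rho> < ms \<and> ms < 1 \<and> (\<forall>m>0. Gf 1 \<rho> m \<le> Delta 1 \<rho>) \<and> isCont (Gf 1 \<rho>) ms
           \<and> Gf 1 \<rho> ms = Delta 1 \<rho>"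
proof -
  define c where "c = \<rho> - 1"
  define R where "R = ln \<rho>"
  define k where "k = \<rho> * R / c"
  have c0: "c > 0" using r by (simp add: c_def)
  have R0: "R > 0" using r by (simp add: R_def)
  have k0: "k > 0" using c0 R0 r by (simp add: k_def)
  have rr: "\<rho> = c + 1" by (simp add: c_def)
  define Gc where "Gc = (\<lambda>m::real. ln m + k * (1 - m))"
  define Gc' where "Gc' = (\<lambda>m::real. 1 / m - k)"
  have eqG: "Gf 1 \<rho> m = Gc m" if m: "m > 0" for m
  proof -
    have lm: "ln (\<rho> * m) = R + ln m" using m r by (simp add: ln_mult R_def)
    have d1: "u_alpha 1 (\<rho> * m) - u_alpha 1 m = m * (\<rho> * R + c * ln m - c)"
      unfolding u_alpha_def lm by (simp add: rr algebra_simps)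
    show ?thesis unfolding Gf_def d1 c_def[symmetric] Gc_def k_def using m c0
      by (simp add: u_alpha_def field_simps rr)
  qed
  have der: "(Gc has_real_derivative Gc' m) (at m)" if m: "m > 0" for m
    unfolding Gc_def Gc'_def using m by (auto intro!: derivative_eq_intros simp: field_simps)
  have ms0: "1/k > 0" using k0 by simp
  have pos: "Gc' m > 0" if "0 < m" "m < 1/k" for m
    unfolding Gc'_def using that k0 by (simp add: field_simps)
  have neg: "Gc' m < 0" if "1/k < m" for m
  proof -
    have m0: "m > 0" using that ms0 by linarith
    have "1 < k * m" using that k0 by (simp add: field_simps)
    then have "1 / m < k" using m0 by (simp add: field_simps)
    then show ?thesis unfolding Gc'_def by simp
  qed
  have val: "Gc (1/k) = Delta 1 \<rho>"
  proof -
    have e: "exp 1 * \<rho> * ln \<rho> / (\<rho> - 1) = exp 1 * k" by (simp add: k_def R_def c_def)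
    have "Delta 1 \<rho> = \<rho> * ln \<rho> / (\<rho> - 1) - ln (exp 1 * \<rho> * ln \<rho> / (\<rho> - 1))"
      by (simp add: Delta_def)
    also have "\<dots> = k - ln (exp 1 * k)" unfolding e by (simp add: k_def R_def c_def)
    also have "\<dots> = k - 1 - ln k" using k0 by (simp add: ln_mult)
    finally show ?thesis unfolding Gc_def using k0 by (simp add: ln_div algebra_simps)
  qed
  show ?thesis by (rule via_closed[OF r eqG der ms0 pos neg val])
qed

lemma case_zero:
  assumes r: "\<rho> > 1"
  shows "\<exists>ms. 1/\<rho> < ms \<and> ms < 1 \<and> (\<forall>m>0. Gf 0 \<rho> m \<le> Delta 0 \<rho>) \<and> isCont (Gf 0 \<rho>) ms
           \<and> Gf 0 \<rho> ms = Delta 0 \<rho>"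
proof -
  define c where "c = \<rho> - 1"
  define R where "R = ln \<rho>"
  define L where "L = R / c"
  have c0: "c > 0" using r by (simp add: c_def)
  have R0: "R > 0" using r by (simp add: R_def)
  have L0: "L > 0" using c0 R0 by (simp add: L_def)
  have rr: "\<rho> = c + 1" by (simp add: c_def)
  define Gc where "Gc = (\<lambda>m::real. - ln m - L * (1 / m - 1))"
  define Gc' where "Gc' = (\<lambda>m::real. (L - m) / m^2)"
  have eqG: "Gf 0 \<rho> m = Gc m" if m: "m > 0" for m
  proof -
    have lm: "ln (\<rho> * m) = R + ln m" using m r by (simp add: ln_mult R_def)
    have d1: "u_alpha 0 (\<rho> * m) - u_alpha 0 m = - R"
      unfolding u_alpha_def lm by simp
    show ?thesis unfolding Gf_def d1 c_def[symmetric] Gc_def L_def using m c0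
      by (simp add: u_alpha_def field_simps)
  qed
  have der: "(Gc has_real_derivative Gc' m) (at m)" if m: "m > 0" for m
    unfolding Gc_def Gc'_def using m by (auto intro!: derivative_eq_intros simp: field_simps power2_eq_square)
  have pos: "Gc' m > 0" if "0 < m" "m < L" for m
    unfolding Gc'_def using that by simp
  have neg: "Gc' m < 0" if "L < m" for m
    unfolding Gc'_def using that L0 by (simp add: divide_neg_pos)
  have val: "Gc L = Delta 0 \<rho>"
  proof -
    have "exp 1 * \<rho> * ln \<rho> / (\<rho> - 1) = exp 1 * \<rho> * L" by (simp add: L_def R_def c_def)
    then have "Delta 0 \<rho> = \<rho> * L - ln (exp 1 * \<rho> * L)" by (simp add: Delta_def L_def R_def c_def)
    also have "\<dots> = \<rho> * L - 1 - R - ln L" using L0 r by (simp add: ln_mult R_def)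
    also have "\<rho> * L - R = L" unfolding L_def rr using c0 by (simp add: field_simps)
    then have "\<rho> * L - 1 - R - ln L = L - 1 - ln L" by simp
    finally show ?thesis unfolding Gc_def using L0 by (simp add: right_diff_distrib)
  qed
  show ?thesis by (rule via_closed[OF r eqG der L0 pos neg val])
qed

lemma Gf_props:
  assumes "\<rho> > 1"
  shows "\<exists>ms. 1/\<rho> < ms \<and> ms < 1 \<and> (\<forall>m>0. Gf \<alpha> \<rho> m \<le> Delta \<alpha> \<rho>) \<and> isCont (Gf \<alpha> \<rho>) ms
           \<and> Gf \<alpha> \<rho> ms = Delta \<alpha> \<rho>"
  using case_gen[OF assms] case_one[OF assms] case_zero[OF assms] by (cases "\<alpha> = 0 \<or> \<alpha> = 1") auto


lemma convex_u: "convex_on {0<..} (u_alpha \<alpha>)"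
proof (cases "\<alpha> = 1")
  case True
  have e: "u_alpha \<alpha> = (\<lambda>t. t * ln t + 1 - t)" using True by (simp add: fun_eq_iff u_alpha_def)
  show ?thesis unfolding e
    by (rule f''_ge0_imp_convex[where f'="\<lambda>t. ln t" and f''="\<lambda>t. 1 / t"])
       (auto intro!: derivative_eq_intros simp: field_simps)
next
  case F1: False
  show ?thesis
  proof (cases "\<alpha> = 0")
    case True
    have e: "u_alpha \<alpha> = (\<lambda>t. - ln t)" using True by (simp add: fun_eq_iff u_alpha_def)
    show ?thesis unfolding e
      by (rule f''_ge0_imp_convex[where f'="\<lambda>t. - (1 / t)" and f''="\<lambda>t. 1 / t^2"])
         (auto intro!: derivative_eq_intros simp: field_simps power2_eq_square)
  next
    case False
    have k: "\<alpha> * (\<alpha> - 1) \<noteq> 0" using F1 False by simp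
    have e: "u_alpha \<alpha> = (\<lambda>t. (t powr \<alpha> - \<alpha> * (t - 1) - 1) / (\<alpha> * (\<alpha> - 1)))"
      using F1 False by (simp add: fun_eq_iff u_alpha_def)
    show ?thesis unfolding e
    proof (rule f''_ge0_imp_convex[where f'="\<lambda>t. (\<alpha> * t powr (\<alpha> - 1) - \<alpha>) / (\<alpha> * (\<alpha> - 1))"
             and f''="\<lambda>t. (\<alpha> * ((\<alpha> - 1) * t powr (\<alpha> - 1 - 1))) / (\<alpha> * (\<alpha> - 1))"])
      show "convex {0::real<..}" by simp
    next
      fix x :: real assume "x \<in> {0<..}"
      then have x: "x > 0" by simp
      show "((\<lambda>t. (t powr \<alpha> - \<alpha> * (t - 1) - 1) / (\<alpha> * (\<alpha> - 1))) has_real_derivative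
              (\<alpha> * x powr (\<alpha> - 1) - \<alpha>) / (\<alpha> * (\<alpha> - 1))) (at x)"
        by (intro derivative_eq_intros has_real_derivative_powr x) (use F1 False in auto)
      show "((\<lambda>t. (\<alpha> * t powr (\<alpha> - 1) - \<alpha>) / (\<alpha> * (\<alpha> - 1))) has_real_derivative
              (\<alpha> * ((\<alpha> - 1) * x powr (\<alpha> - 1 - 1))) / (\<alpha> * (\<alpha> - 1))) (at x)"
        by (intro derivative_eq_intros has_real_derivative_powr x) (use F1 False in auto)
      have "(\<alpha> * ((\<alpha> - 1) * x powr (\<alpha> - 1 - 1))) / (\<alpha> * (\<alpha> - 1)) = x powr (\<alpha> - 1 - 1)"
        using k by simp
      then show "0 \<le> (\<alpha> * ((\<alpha> - 1) * x powr (\<alpha> - 1 - 1))) / (\<alpha> * (\<alpha> - 1))" by simp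
    qed
  qed
qed

lemma chord:
  fixes f :: "real \<Rightarrow> real"
  assumes cv: "convex_on S f" and xy: "x < y" "x \<in> S" "y \<in> S" and t: "x \<le> t" "t \<le> y"
  shows "f t \<le> f x + (t - x) / (y - x) * (f y - f x)"
proof -
  define s where "s = (t - x) / (y - x)"
  have s: "0 \<le> s" "s \<le> 1" using xy t by (auto simp: s_def field_simps)
  have yx: "y - x \<noteq> 0" using xy by simp
  have "(1 - s) * x + s * y = x + s * (y - x)" by (simp add: algebra_simps)
  also have "\<dots> = t" using yx by (simp add: s_def)
  finally have "(1 - s) *\<^sub>R x + s *\<^sub>R y = t" by simp
  then have "f t \<le> (1 - s) * f x + s * f y" using convex_onD[OF cv s xy(2,3)] by simp
  moreover have "(1 - s) * f x + s * f y = f x + s * (f y - f x)" by (simp add: algebra_simps)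
  ultimately show ?thesis by (simp add: s_def)
qed

lemma upper:
  assumes r: "\<rho> > 1" and n: "n \<ge> 1" and Q: "Q \<in> Pn \<rho> n"
  shows "alpha_div \<alpha> n Q (unif n) \<le> Delta \<alpha> \<rho>"
proof -
  define A where "A = Q ` {1..n}"
  have Apos: "\<And>x. x \<in> {1..n} \<Longrightarrow> Q x > 0" and sum1: "(\<Sum>x\<in>{1..n}. Q x) = 1"
    and rat: "Max A / Min A \<le> \<rho>" using Q by (auto simp: Pn_def A_def)
  have fin: "finite A" "A \<noteq> {}" using n by (auto simp: A_def)
  define mn where "mn = Min A"
  have mn0: "mn > 0" using Min_in[OF fin] Apos by (auto simp: mn_def A_def)
  have mx: "Max A \<le> \<rho> * mn" using rat mn0 by (simp add: mn_def divide_le_eq)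
  have bnd: "mn \<le> Q x \<and> Q x \<le> \<rho> * mn" if "x \<in> {1..n}" for x
  proof -
    have "Q x \<in> A" using that by (simp add: A_def)
    then show ?thesis using Min_le[OF fin(1)] Max_ge[OF fin(1)] mx unfolding mn_def by (meson order_trans)
  qed
  define m where "m = real n * mn"
  have n0: "real n > 0" using n by simp
  have m0: "m > 0" using mn0 n0 by (simp add: m_def)
  define f where "f = u_alpha \<alpha>"
  define B where "B = (f (\<rho> * m) - f m) / (\<rho> * m - m)"
  have mlt: "m < \<rho> * m" using m0 r by simp
  have trm: "unif n x * f (Q x / unif n x) \<le> 1 / real n * f m + B * Q x - B * m / real n"
    if x: "x \<in> {1..n}" for x
  proof -
    have t: "Q x / unif n x = real n * Q x" using x by (simp add: unif_def)
    have t1: "m \<le> real n * Q x" "real n * Q x \<le> \<rho> * m" using bnd[OF x] n0 by (auto simp: m_def)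
    have "f (real n * Q x) \<le> f m + (real n * Q x - m) / (\<rho> * m - m) * (f (\<rho> * m) - f m)"
      using chord[OF convex_u mlt _ _ t1] m0 mlt unfolding f_def by simp
    then have "f (real n * Q x) \<le> f m + (real n * Q x - m) * B" by (simp add: B_def)
    then have "1 / real n * f (real n * Q x) \<le> 1 / real n * (f m + (real n * Q x - m) * B)"
      using n0 by (simp add: divide_right_mono)
    also have "\<dots> = 1 / real n * f m + B * Q x - B * m / real n" using n0 by (simp add: field_simps)
    finally show ?thesis using x t by (simp add: unif_def mult.commute)
  qed
  have "alpha_div \<alpha> n Q (unif n) \<le> (\<Sum>x\<in>{1..n}. 1 / real n * f m + B * Q x - B * m / real n)"
    unfolding alpha_div_def f_def[symmetric] by (rule sum_mono) (rule trm)
  also have "\<dots> = f m + B - B * m"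
    using n0 sum1 by (simp add: sum.distrib sum_subtractf sum_distrib_left[symmetric])
  also have "\<dots> = f m + (1 - m) * B" by (simp add: algebra_simps)
  also have "\<dots> = Gf \<alpha> \<rho> m"
  proof -
    have "\<rho> * m - m = (\<rho> - 1) * m" by (simp add: algebra_simps)
    then show ?thesis unfolding Gf_def f_def[symmetric] B_def by simp
  qed
  also have "\<dots> \<le> Delta \<alpha> \<rho>" using Gf_props[OF r] m0 by blast
  finally show ?thesis .
qed


lemma sum_if_le:
  fixes A B :: real
  assumes "k \<le> n"
  shows "(\<Sum>x\<in>{1..n}. if x \<le> k then A else B) = real k * A + (real n - real k) * B"
  using assms
proof (induction n)
  case 0 then show ?case by simp
next
  case (Suc n)
  have e: "{1..Suc n} = insert (Suc n) {1..n}" by auto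
  show ?case
  proof (cases "k \<le> n")
    case True
    then show ?thesis unfolding e using Suc by (simp add: algebra_simps)
  next
    case False
    then have k: "k = Suc n" using Suc by simp
    have "(\<Sum>x\<in>{1..n}. if x \<le> k then A else B) = (\<Sum>x\<in>{1..n}. A)" using k by (intro sum.cong) auto
    then show ?thesis unfolding e using k by (simp add: algebra_simps)
  qed
qed

lemma lower:
  assumes r: "\<rho> > 1" and n: "n \<ge> 1" and k: "k \<le> n"
  shows "\<exists>Q\<in>Pn \<rho> n. alpha_div \<alpha> n Q (unif n) = Gf \<alpha> \<rho> (1 / (1 + (\<rho> - 1) * (real k / real n)))"
proof -
  define D where "D = real n + (\<rho> - 1) * real k"
  have n0: "real n > 0" using n by simp
  have D0: "D > 0" using n0 r by (simp add: D_def add_pos_nonneg)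
  define Q where "Q = (\<lambda>x. if x \<in> {1..n} then (if x \<le> k then \<rho> else 1) / D else 0)"
  have fin: "finite (Q ` {1..n})" "Q ` {1..n} \<noteq> {}" using n by auto
  have QP: "Q \<in> Pn \<rho> n"
  proof -
    have pos: "\<forall>x\<in>{1..n}. Q x > 0" using D0 r by (simp add: Q_def)
    have s: "(\<Sum>x\<in>{1..n}. Q x) = 1"
    proof -
      have "(\<Sum>x\<in>{1..n}. Q x) = (\<Sum>x\<in>{1..n}. if x \<le> k then \<rho> / D else 1 / D)"
        by (intro sum.cong) (auto simp: Q_def)
      also have "\<dots> = real k * (\<rho> / D) + (real n - real k) * (1 / D)" using sum_if_le[OF k] .
      also have "\<dots> = (real k * \<rho> + (real n - real k)) / D" by (simp add: add_divide_distrib)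
      also have "real k * \<rho> + (real n - real k) = D" by (simp add: D_def algebra_simps)
      also have "D / D = 1" using D0 by simp
      finally show ?thesis .
    qed
    have mx: "Max (Q ` {1..n}) \<le> \<rho> / D"
      using fin D0 r by (auto simp: Max_le_iff Q_def divide_right_mono)
    have mn: "Min (Q ` {1..n}) \<ge> 1 / D"
      using fin D0 r by (auto simp: Min_ge_iff Q_def divide_right_mono)
    have "Max (Q ` {1..n}) / Min (Q ` {1..n}) \<le> (\<rho> / D) / (1 / D)"
      by (rule frac_le) (use mx mn D0 r in auto)
    also have "\<dots> = \<rho>" using D0 by simp
    finally show ?thesis using pos s by (auto simp: Pn_def Q_def)
  qed
  define m where "m = real n / D"
  have m0: "m > 0" using n0 D0 by (simp add: m_def)
  have me: "1 / (1 + (\<rho> - 1) * (real k / real n)) = m"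
    using n0 D0 by (simp add: m_def D_def field_simps)
  define f where "f = u_alpha \<alpha>"
  have "alpha_div \<alpha> n Q (unif n) = (\<Sum>x\<in>{1..n}. if x \<le> k then 1 / real n * f (\<rho> * m) else 1 / real n * f m)"
    unfolding alpha_div_def
    by (intro sum.cong) (auto simp: Q_def unif_def m_def f_def field_simps)
  also have "\<dots> = real k * (1 / real n * f (\<rho> * m)) + (real n - real k) * (1 / real n * f m)"
    using sum_if_le[OF k] .
  also have "\<dots> = Gf \<alpha> \<rho> m"
  proof -
    have e1: "1 - m = (D - real n) / D" using D0 by (simp add: m_def diff_divide_distrib)
    have e2: "D - real n = (\<rho> - 1) * real k" by (simp add: D_def)
    have "(1 - m) / ((\<rho> - 1) * m) = ((\<rho> - 1) * real k / D) / ((\<rho> - 1) * (real n / D))"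
      unfolding e1 e2 by (simp add: m_def)
    also have "\<dots> = real k / real n" using D0 r n0 by (simp add: field_simps)
    finally have "(1 - m) / ((\<rho> - 1) * m) = real k / real n" .
    then have "Gf \<alpha> \<rho> m = f m + real k / real n * (f (\<rho> * m) - f m)"
      unfolding Gf_def f_def[symmetric] by simp
    then show ?thesis using n0 by (simp add: field_simps)
  qed
  finally show ?thesis using QP me by auto
qed


lemma seq:
  assumes r: "\<rho> > 1"
  shows "\<exists>X. X \<longlonglongrightarrow> Delta \<alpha> \<rho> \<and> (\<forall>n\<ge>1. \<exists>Q\<in>Pn \<rho> n. X n \<le> alpha_div \<alpha> n Q (unif n))"
proof -
  obtain ms where ms: "1/\<rho> < ms" "ms < 1" "isCont (Gf \<alpha> \<rho>) ms" "Gf \<alpha> \<rho> ms = Delta \<alpha> \<rho>"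
    using Gf_props[OF r, of \<alpha>] by blast
  have ms0: "ms > 0" using ms(1) r by (smt (verit) divide_pos_pos)
  define l where "l = (1 - ms) / ((\<rho> - 1) * ms)"
  have l0: "l \<ge> 0" using ms ms0 r by (simp add: l_def)
  have l1: "l \<le> 1"
  proof -
    have "1 < \<rho> * ms" using ms(1) r by (simp add: field_simps)
    then have "1 - ms \<le> (\<rho> - 1) * ms" by (simp add: algebra_simps)
    then show ?thesis using ms0 r by (simp add: l_def divide_le_eq)
  qed
  define kn where "kn = (\<lambda>n::nat. nat \<lfloor>l * real n\<rfloor>)"
  have knle: "kn n \<le> n" for n
  proof -
    have "l * real n \<le> real n" using mult_right_mono[OF l1, of "real n"] by simp
    then have "\<lfloor>l * real n\<rfloor> \<le> int n" by (metis floor_mono floor_of_nat)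
    then show ?thesis by (simp add: kn_def)
  qed
  have knr: "real (kn n) = of_int \<lfloor>l * real n\<rfloor>" for n
    using l0 by (simp add: kn_def)
  have lim1: "(\<lambda>n. real (kn n) / real n) \<longlonglongrightarrow> l"
  proof (rule tendsto_sandwich[of "\<lambda>n. l - 1 / real n" _ _ "\<lambda>n. l"])
    show "\<forall>\<^sub>F n in sequentially. l - 1 / real n \<le> real (kn n) / real n"
      using eventually_ge_at_top[of "1::nat"]
    proof eventually_elim
      case (elim n)
      have "l * real n < of_int \<lfloor>l * real n\<rfloor> + 1" by linarith
      then have "l * real n - 1 \<le> real (kn n)" by (simp add: knr)
      then have "(l * real n - 1) / real n \<le> real (kn n) / real n" by (rule divide_right_mono) simp
      moreover have "(l * real n - 1) / real n = l - 1 / real n" using elim by (simp add: field_simps)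
      ultimately show ?case by simp
    qed
    show "\<forall>\<^sub>F n in sequentially. real (kn n) / real n \<le> l"
      using eventually_ge_at_top[of "1::nat"]
    proof eventually_elim
      case (elim n)
      have "real (kn n) \<le> l * real n" by (simp add: knr)
      then show ?case using elim by (simp add: field_simps)
    qed
    show "(\<lambda>n. l - 1 / real n) \<longlonglongrightarrow> l"
      using tendsto_diff[OF tendsto_const[of l] lim_1_over_n] by simp
  qed simp
  have lim2: "(\<lambda>n. 1 / (1 + (\<rho> - 1) * (real (kn n) / real n))) \<longlonglongrightarrow> 1 / (1 + (\<rho> - 1) * l)"
  proof -
    have "(\<rho> - 1) * l \<ge> 0" using l0 r by simp
    then have "1 + (\<rho> - 1) * l \<noteq> 0" by linarith
    then show ?thesis by (intro tendsto_intros lim1)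
  qed
  have "1 / (1 + (\<rho> - 1) * l) = ms" using ms0 r by (simp add: l_def field_simps)
  with lim2 have lim3: "(\<lambda>n. Gf \<alpha> \<rho> (1 / (1 + (\<rho> - 1) * (real (kn n) / real n)))) \<longlonglongrightarrow> Delta \<alpha> \<rho>"
    using isCont_tendsto_compose[OF ms(3)] ms(4) by metis
  moreover have "\<forall>n\<ge>1. \<exists>Q\<in>Pn \<rho> n. Gf \<alpha> \<rho> (1 / (1 + (\<rho> - 1) * (real (kn n) / real n))) \<le> alpha_div \<alpha> n Q (unif n)"
    using lower[OF r _ knle] by (metis order_refl)
  ultimately show ?thesis by blast
qed

lemma sup_lim:
  fixes F :: "nat \<Rightarrow> 'a \<Rightarrow> real"
  assumes ne: "\<And>n. n \<ge> 1 \<Longrightarrow> S n \<noteq> {}"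
    and ub: "\<And>n Q. n \<ge> 1 \<Longrightarrow> Q \<in> S n \<Longrightarrow> F n Q \<le> B"
    and X: "X \<longlonglongrightarrow> B"
    and lb: "\<And>n. n \<ge> 1 \<Longrightarrow> \<exists>Q\<in>S n. X n \<le> F n Q"
  shows "(\<lambda>n. SUP Q\<in>S n. F n Q) \<longlonglongrightarrow> B" "\<And>n. n \<ge> 1 \<Longrightarrow> (SUP Q\<in>S n. F n Q) \<le> B"
proof -
  show le: "(SUP Q\<in>S n. F n Q) \<le> B" if "n \<ge> 1" for n
    using ne[OF that] ub[OF that] by (intro cSUP_least) auto
  have ge: "X n \<le> (SUP Q\<in>S n. F n Q)" if n1: "n \<ge> 1" for n
  proof -
    obtain Q where Q: "Q \<in> S n" "X n \<le> F n Q" using lb[OF n1] by blast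
    have "bdd_above (F n ` S n)" using ub[OF n1] by (intro bdd_aboveI2) auto
    then show ?thesis by (rule cSUP_upper2[where f="F n" and A="S n", OF _ Q(1) Q(2)])
  qed
  show "(\<lambda>n. SUP Q\<in>S n. F n Q) \<longlonglongrightarrow> B"
  proof (rule tendsto_sandwich[OF _ _ X tendsto_const])
    show "\<forall>\<^sub>F n in sequentially. X n \<le> (SUP Q\<in>S n. F n Q)"
      using eventually_ge_at_top[of "1::nat"] by eventually_elim (rule ge)
    show "\<forall>\<^sub>F n in sequentially. (SUP Q\<in>S n. F n Q) \<le> B"
      using eventually_ge_at_top[of "1::nat"] by eventually_elim (rule le)
  qed
qed

lemma Pn_ne: assumes "n \<ge> 1" "\<rho> > 1" shows "Pn \<rho> n \<noteq> {}"
  using lower[OF assms(2,1), of 0] by auto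

lemma rel_ent_eq:
  assumes n: "n \<ge> 1" and Q: "Q \<in> Pn \<rho> n"
  shows "rel_ent b n Q (unif n) = alpha_div 1 n Q (unif n) / ln b"
proof -
  have sum1: "(\<Sum>x\<in>{1..n}. Q x) = 1" using Q by (simp add: Pn_def)
  have n0: "real n > 0" using n by simp
  have "alpha_div 1 n Q (unif n) = (\<Sum>x\<in>{1..n}. Q x * ln (real n * Q x) + 1 / real n - Q x)"
    unfolding alpha_div_def u_alpha_def
    by (intro sum.cong) (use n0 in \<open>auto simp: unif_def field_simps\<close>)
  also have "\<dots> = (\<Sum>x\<in>{1..n}. Q x * ln (real n * Q x))"
    using n0 sum1 by (simp add: sum.distrib sum_subtractf)
  finally have a: "alpha_div 1 n Q (unif n) = (\<Sum>x\<in>{1..n}. Q x * ln (real n * Q x))" .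
  have "rel_ent b n Q (unif n) = (\<Sum>x\<in>{1..n}. Q x * ln (real n * Q x) / ln b)"
    unfolding rel_ent_def log_def by (intro sum.cong) (auto simp: unif_def field_simps)
  also have "\<dots> = (\<Sum>x\<in>{1..n}. Q x * ln (real n * Q x)) / ln b" by (simp add: sum_divide_distrib)
  finally show ?thesis using a by simp
qed

theorem mainTheorem9:
  fixes \<alpha> \<rho> :: real
  assumes "\<rho> > 1"
  shows "((\<lambda>n. SUP Q\<in>Pn \<rho> n. alpha_div \<alpha> n Q (unif n)) \<longlonglongrightarrow> Delta \<alpha> \<rho>) \<and>
         (\<forall>b::real. b > 1 \<longrightarrow>
           (\<forall>n::nat. n \<ge> 2 \<longrightarrow>
              (SUP Q\<in>Pn \<rho> n. rel_ent b n Q (unif n))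
                \<le> \<rho> * log b \<rho> / (\<rho> - 1) - log b (exp 1 * \<rho> * ln \<rho> / (\<rho> - 1))) \<and>
           (\<lambda>n. SUP Q\<in>Pn \<rho> n. rel_ent b n Q (unif n)) \<longlonglongrightarrow>
              \<rho> * log b \<rho> / (\<rho> - 1) - log b (exp 1 * \<rho> * ln \<rho> / (\<rho> - 1)))"
proof -
  have r: "\<rho> > 1" by fact
  have A: "(\<lambda>n. SUP Q\<in>Pn \<rho> n. alpha_div \<alpha> n Q (unif n)) \<longlonglongrightarrow> Delta \<alpha> \<rho>"
  proof -
    obtain X where X: "X \<longlonglongrightarrow> Delta \<alpha> \<rho>" "\<forall>n\<ge>1. \<exists>Q\<in>Pn \<rho> n. X n \<le> alpha_div \<alpha> n Q (unif n)"
      using seq[OF r] by blast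
    show ?thesis by (rule sup_lim(1)[OF Pn_ne[OF _ r] upper[OF r] X(1)]) (use X(2) in auto)
  qed
  have B: "(\<forall>n::nat. n \<ge> 2 \<longrightarrow>
              (SUP Q\<in>Pn \<rho> n. rel_ent b n Q (unif n))
                \<le> \<rho> * log b \<rho> / (\<rho> - 1) - log b (exp 1 * \<rho> * ln \<rho> / (\<rho> - 1))) \<and>
           (\<lambda>n. SUP Q\<in>Pn \<rho> n. rel_ent b n Q (unif n)) \<longlonglongrightarrow>
              \<rho> * log b \<rho> / (\<rho> - 1) - log b (exp 1 * \<rho> * ln \<rho> / (\<rho> - 1))" if b: "b > 1" for b
  proof -
    have lb0: "ln b > 0" using b by simp
    have dl: "Delta 1 \<rho> / ln b = \<rho> * log b \<rho> / (\<rho> - 1) - log b (exp 1 * \<rho> * ln \<rho> / (\<rho> - 1))"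
      using lb0 by (simp add: Delta_def log_def diff_divide_distrib)
    obtain X where X: "X \<longlonglongrightarrow> Delta 1 \<rho>" "\<forall>n\<ge>1. \<exists>Q\<in>Pn \<rho> n. X n \<le> alpha_div 1 n Q (unif n)"
      using seq[OF r] by blast
    have X': "(\<lambda>n. X n / ln b) \<longlonglongrightarrow> Delta 1 \<rho> / ln b" by (intro tendsto_intros X(1)) (use lb0 in simp)
    have ub: "rel_ent b n Q (unif n) \<le> Delta 1 \<rho> / ln b" if "n \<ge> 1" "Q \<in> Pn \<rho> n" for n Q
      using rel_ent_eq[OF that] upper[OF r that, of 1] lb0 by (simp add: divide_right_mono)
    have lbd: "\<exists>Q\<in>Pn \<rho> n. X n / ln b \<le> rel_ent b n Q (unif n)" if n1: "n \<ge> 1" for n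
    proof -
      obtain Q where Q: "Q \<in> Pn \<rho> n" "X n \<le> alpha_div 1 n Q (unif n)" using X(2) n1 by blast
      then show ?thesis using rel_ent_eq[OF n1 Q(1)] lb0 by (intro bexI[OF _ Q(1)]) (simp add: divide_right_mono)
    qed
    note S = sup_lim[of "Pn \<rho>" "\<lambda>n Q. rel_ent b n Q (unif n)" "Delta 1 \<rho> / ln b" "\<lambda>n. X n / ln b",
                     OF Pn_ne[OF _ r] ub X' lbd]
    show ?thesis using S unfolding dl by auto
  qed
  show ?thesis using A B by blast
qed

end
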